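(* If $W=\langle w_1,\ldots,w_n\rangle$ is a weave, then the subtournaments $W-\{w_1,w_2\},\ W-\{w_2,w_3\},\ \ldots,\ W-\{w_{n-1},w_n\}$ are all isomorphic to each other. Furthermore, for any $i,j$ there is an isomorphism $\phi$ from $W-\{w_i,w_{i+1}\}$ to $W-\{w_j,w_{j+1}\}$ such that whenever $\phi(w_k)=w_\ell$, the integers $k$ and $\ell$ have the same parity.
   Context: A tournament is a finite, non-null, loopless directed graph in which for any two distinct vertices $u,v$ there is exactly one edge with both ends in $\{u,v\}$; write $u\to v$ for the edge from $u$ to $v$. $W-X$ denotes the subtournament induced on $V(W)\setminus X$. A weave $\langle w_1,\dots,w_n\rangle$ is a tournament on $w_1,\dots,w_n$ such that: $w_i\to w_j$ whenever $i<j$ and $i,j$ have opposite parity; either $w_i\to w_j$ for all $i<j$ both odd, or $w_j\to w_i$ for all $i<j$ both odd; and either $w_i\to w_j$ for all $i<j$ both even, or $w_j\to w_i$ for all $i<j$ both even. *)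

theory Defs
  imports Main
begin

text \<open>A tournament on a finite nonempty vertex set V with edge relation E
  (E u v means the edge u \<rightarrow> v). Only the restriction of E to V matters.\<close>
definition tournament :: "'a set \<Rightarrow> ('a \<Rightarrow> 'a \<Rightarrow> bool) \<Rightarrow> bool" where
  "tournament V E \<longleftrightarrow> finite V \<and> V \<noteq> {} \<and> (\<forall>u\<in>V. \<not> E u u) \<and>
     (\<forall>u\<in>V. \<forall>v\<in>V. u \<noteq> v \<longrightarrow> (E u v \<longleftrightarrow> \<not> E v u))"

definition tourn_iso :: "'a set \<Rightarrow> ('a \<Rightarrow> 'a \<Rightarrow> bool) \<Rightarrow> 'b set \<Rightarrow> ('b \<Rightarrow> 'b \<Rightarrow> bool)
    \<Rightarrow> ('a \<Rightarrow> 'b) \<Rightarrow> bool" where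
  "tourn_iso V E V' E' \<phi> \<longleftrightarrow> bij_betw \<phi> V V' \<and>
     (\<forall>u\<in>V. \<forall>v\<in>V. E u v \<longleftrightarrow> E' (\<phi> u) (\<phi> v))"

definition weave :: "nat \<Rightarrow> (nat \<Rightarrow> 'a) \<Rightarrow> ('a \<Rightarrow> 'a \<Rightarrow> bool) \<Rightarrow> bool" where
  "weave n w E \<longleftrightarrow> inj_on w {1..n} \<and> tournament (w ` {1..n}) E \<and>
     (\<forall>i\<in>{1..n}. \<forall>j\<in>{1..n}. i < j \<and> odd i \<noteq> odd j \<longrightarrow> E (w i) (w j)) \<and>
     ((\<forall>i\<in>{1..n}. \<forall>j\<in>{1..n}. i < j \<and> odd i \<and> odd j \<longrightarrow> E (w i) (w j)) \<or>
      (\<forall>i\<in>{1..n}. \<forall>j\<in>{1..n}. i < j \<and> odd i \<and> odd j \<longrightarrow> E (w j) (w i))) \<and>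
     ((\<forall>i\<in>{1..n}. \<forall>j\<in>{1..n}. i < j \<and> even i \<and> even j \<longrightarrow> E (w i) (w j)) \<or>
      (\<forall>i\<in>{1..n}. \<forall>j\<in>{1..n}. i < j \<and> even i \<and> even j \<longrightarrow> E (w j) (w i)))"

end

theory Submission
  imports Defs
begin

lemma edge_det:
  assumes W: "weave n w E"
    and ab: "a \<in> {1..n}" "b \<in> {1..n}" "a' \<in> {1..n}" "b' \<in> {1..n}" "a < b" "a' < b'"
    and p: "even a = even a'" "even b = even b'"
  shows "E (w a) (w b) = E (w a') (w b')"
proof -
  have inj: "inj_on w {1..n}" and T: "tournament (w ` {1..n}) E" using W by (auto simp: weave_def)
  have opp: "\<And>i j. i\<in>{1..n} \<Longrightarrow> j\<in>{1..n} \<Longrightarrow> i < j \<Longrightarrow> odd i \<noteq> odd j \<Longrightarrow> E (w i) (w j)"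
    using W by (auto simp: weave_def)
  have anti: "\<And>i j. i\<in>{1..n} \<Longrightarrow> j\<in>{1..n} \<Longrightarrow> i < j \<Longrightarrow> E (w j) (w i) \<longleftrightarrow> \<not> E (w i) (w j)"
  proof -
    fix i j assume "i\<in>{1..n}" "j\<in>{1..n}" "i < j"
    then have "w i \<noteq> w j" using inj by (metis inj_onD less_irrefl)
    then show "E (w j) (w i) \<longleftrightarrow> \<not> E (w i) (w j)" using T \<open>i\<in>{1..n}\<close> \<open>j\<in>{1..n}\<close>
      unfolding tournament_def by blast
  qed
  show ?thesis
  proof (cases "odd a = odd b")
    case False
    then show ?thesis using opp ab p by auto
  next
    case True
    show ?thesis
    proof (cases "odd a")
      case True
      then have "odd b" "odd a'" "odd b'" using \<open>odd a = odd b\<close> p by auto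
      from W have "(\<forall>i\<in>{1..n}. \<forall>j\<in>{1..n}. i < j \<and> odd i \<and> odd j \<longrightarrow> E (w i) (w j)) \<or>
      (\<forall>i\<in>{1..n}. \<forall>j\<in>{1..n}. i < j \<and> odd i \<and> odd j \<longrightarrow> E (w j) (w i))" by (simp add: weave_def)
      then show ?thesis using anti[of a b] anti[of a' b'] ab True \<open>odd b\<close> \<open>odd a'\<close> \<open>odd b'\<close> by blast
    next
      case False
      then have "even a" "even b" "even a'" "even b'" using \<open>odd a = odd b\<close> p by auto
      from W have "(\<forall>i\<in>{1..n}. \<forall>j\<in>{1..n}. i < j \<and> even i \<and> even j \<longrightarrow> E (w i) (w j)) \<or>
      (\<forall>i\<in>{1..n}. \<forall>j\<in>{1..n}. i < j \<and> even i \<and> even j \<longrightarrow> E (w j) (w i))" by (simp add: weave_def)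
      then show ?thesis using anti[of a b] anti[of a' b'] ab \<open>even a\<close> \<open>even b\<close> \<open>even a'\<close> \<open>even b'\<close> by blast
    qed
  qed
qed

definition sh :: "nat \<Rightarrow> nat \<Rightarrow> nat \<Rightarrow> nat" where
  "sh i j k = (if k < min i j \<or> k > max i j + 1 then k else if i \<le> j then k - 2 else k + 2)"

lemma sh_in:
  assumes "i \<in> {1..<n}" "j \<in> {1..<n}" "k \<in> {1..n} - {i, i+1}"
  shows "sh i j k \<in> {1..n} - {j, j+1}"
  using assms unfolding sh_def by auto

lemma sh_inv:
  assumes "i \<in> {1..<n}" "j \<in> {1..<n}" "k \<in> {1..n} - {i, i+1}"
  shows "sh j i (sh i j k) = k"
  using assms unfolding sh_def by auto

lemma sh_mono:
  assumes "i \<in> {1..<n}" "j \<in> {1..<n}" "a \<in> {1..n} - {i, i+1}" "b \<in> {1..n} - {i, i+1}" "a < b"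
  shows "sh i j a < sh i j b"
  using assms unfolding sh_def by auto

lemma sh_par:
  assumes "i \<in> {1..<n}" "j \<in> {1..<n}" "k \<in> {1..n} - {i, i+1}"
  shows "even (sh i j k) = even k"
  using assms unfolding sh_def by auto

lemma sh_bij:
  assumes "i \<in> {1..<n}" "j \<in> {1..<n}"
  shows "bij_betw (sh i j) ({1..n} - {i, i+1}) ({1..n} - {j, j+1})"
  apply (rule bij_betw_byWitness[where f'="sh j i"])
  using sh_in[OF assms] sh_in[OF assms(2,1)] sh_inv[OF assms] sh_inv[OF assms(2,1)] by auto

theorem corollary3p5:
  fixes n :: nat and w :: "nat \<Rightarrow> 'a" and E :: "'a \<Rightarrow> 'a \<Rightarrow> bool"
  assumes "weave n w E"
    and "i \<in> {1..<n}" and "j \<in> {1..<n}"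
  shows "(\<exists>\<phi>. tourn_iso (w ` {1..n} - {w i, w (i+1)}) E (w ` {1..n} - {w j, w (j+1)}) E \<phi>)
    \<and> (\<exists>\<phi>. tourn_iso (w ` {1..n} - {w i, w (i+1)}) E (w ` {1..n} - {w j, w (j+1)}) E \<phi>
         \<and> (\<forall>k\<in>{1..n}. \<forall>l\<in>{1..n}.
              w k \<in> w ` {1..n} - {w i, w (i+1)} \<and> \<phi> (w k) = w l \<longrightarrow> (even k \<longleftrightarrow> even l)))"
proof -
  have inj: "inj_on w {1..n}" using assms(1) by (simp add: weave_def)
  define S where "S = {1..n} - {i, i+1}"
  define T where "T = {1..n} - {j, j+1}"
  have SI: "w ` {1..n} - {w i, w (i+1)} = w ` S"
    unfolding S_def using inj assms(2) by (auto simp: inj_on_eq_iff)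
  have TI: "w ` {1..n} - {w j, w (j+1)} = w ` T"
    unfolding T_def using inj assms(3) by (auto simp: inj_on_eq_iff)
  have injS: "inj_on w S" "inj_on w T" using inj unfolding S_def T_def by (auto intro: inj_on_subset)
  define g where "g = the_inv_into {1..n} w"
  have g: "\<And>k. k \<in> {1..n} \<Longrightarrow> g (w k) = k" unfolding g_def using inj by (simp add: the_inv_into_f_f)
  define \<phi> where "\<phi> = (\<lambda>x. w (sh i j (g x)))"
  have phik: "\<And>k. k \<in> S \<Longrightarrow> \<phi> (w k) = w (sh i j k)" unfolding \<phi>_def S_def using g by auto
  have sb: "bij_betw (sh i j) S T" unfolding S_def T_def using sh_bij assms by auto
  have b1: "bij_betw (w \<circ> sh i j) S (w ` T)"
    using bij_betw_trans[OF sb inj_on_imp_bij_betw[OF injS(2)]] .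
  have b2: "bij_betw \<phi> (w ` S) (w ` T)"
  proof -
    have "bij_betw (w \<circ> sh i j \<circ> g) (w ` S) (w ` T)"
    proof (rule bij_betw_trans[OF _ b1])
      show "bij_betw g (w ` S) S"
        by (rule bij_betw_byWitness[where f'=w]) (use g S_def in auto)
    qed
    moreover have "\<And>x. x \<in> w ` S \<Longrightarrow> (w \<circ> sh i j \<circ> g) x = \<phi> x" using phik g S_def by auto
    ultimately show ?thesis using bij_betw_cong by blast
  qed
  have edges: "\<forall>u\<in>w ` S. \<forall>v\<in>w ` S. E u v \<longleftrightarrow> E (\<phi> u) (\<phi> v)"
  proof (intro ballI)
    fix u v assume "u \<in> w ` S" "v \<in> w ` S"
    then obtain a b where ab: "a \<in> S" "b \<in> S" "u = w a" "v = w b" by auto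
    have sa: "sh i j a \<in> {1..n}" "sh i j b \<in> {1..n}" using sh_in assms ab unfolding S_def by blast+
    have pa: "even (sh i j a) = even a" "even (sh i j b) = even b" using sh_par assms ab unfolding S_def by blast+
    have aS: "a \<in> {1..n}" "b \<in> {1..n}" using ab S_def by auto
    consider "a < b" | "a = b" | "b < a" by arith
    then show "E u v \<longleftrightarrow> E (\<phi> u) (\<phi> v)"
    proof cases
      case 1
      then have "sh i j a < sh i j b" using sh_mono assms ab unfolding S_def by blast
      then show ?thesis using edge_det[OF assms(1) aS sa 1] pa ab phik by auto
    next
      case 2
      have "\<forall>x\<in>w ` {1..n}. \<not> E x x" using assms(1) by (simp add: weave_def tournament_def)
      then show ?thesis using ab 2 aS sa phik by auto
    next
      case 3
      then have "sh i j b < sh i j a" using sh_mono assms ab unfolding S_def by blast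
      have T: "tournament (w ` {1..n}) E" using assms(1) by (simp add: weave_def)
      have ne: "w a \<noteq> w b" "w (sh i j a) \<noteq> w (sh i j b)"
        using inj aS sa 3 \<open>sh i j b < sh i j a\<close> by (auto simp: inj_on_eq_iff)
      have t1: "E (w a) (w b) \<longleftrightarrow> \<not> E (w b) (w a)" using T ne(1) aS unfolding tournament_def by blast
      have t2: "E (w (sh i j a)) (w (sh i j b)) \<longleftrightarrow> \<not> E (w (sh i j b)) (w (sh i j a))"
        using T ne(2) sa unfolding tournament_def by blast
      show ?thesis using edge_det[OF assms(1) aS(2,1) sa(2,1) 3 \<open>sh i j b < sh i j a\<close>] pa ab phik t1 t2 by auto
    qed
  qed
  have iso: "tourn_iso (w ` {1..n} - {w i, w (i+1)}) E (w ` {1..n} - {w j, w (j+1)}) E \<phi>"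
    unfolding tourn_iso_def SI TI using b2 edges by blast
  have par: "\<forall>k\<in>{1..n}. \<forall>l\<in>{1..n}.
              w k \<in> w ` {1..n} - {w i, w (i+1)} \<and> \<phi> (w k) = w l \<longrightarrow> (even k \<longleftrightarrow> even l)"
  proof (intro ballI impI)
    fix k l assume kl: "k \<in> {1..n}" "l \<in> {1..n}" and h: "w k \<in> w ` {1..n} - {w i, w (i+1)} \<and> \<phi> (w k) = w l"
    then have "k \<in> S" using SI inj by (auto simp: S_def inj_on_eq_iff)
    then have "w (sh i j k) = w l" using h phik by auto
    moreover have "sh i j k \<in> {1..n}" using sh_in assms \<open>k \<in> S\<close> unfolding S_def by blast
    ultimately have "sh i j k = l" using inj kl by (simp add: inj_on_eq_iff)
    then show "even k \<longleftrightarrow> even l" using sh_par assms \<open>k \<in> S\<close> unfolding S_def by blast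
  qed
  show ?thesis using iso par by blast
qed

end
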